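(* Let $\mathcal{F}$ be a frame and $C_s,C_{cut},C_o\subseteq\mathcal{CH}$ such that $C_{cut}$ is an undirected cut between $C_s$ and $C_o$. If there is no disclosure between $C_s$ and $C_{cut}$, then there is no disclosure between $C_s$ and $C_o$.
   Context: A frame $\mathcal{F}$ consists of pairwise disjoint sets $\mathcal{LO}$ (locations), $\mathcal{CH}$ (channels), $\mathcal{D}$ (data). Each channel $c$ either has both a sender $\mathrm{sender}(c)\in\mathcal{LO}$ and recipient $\mathrm{recipient}(c)\in\mathcal{LO}$ (possibly equal), or neither; $\mathrm{chans}(\ell)=\{c:\mathrm{sender}(c)=\ell\text{ or }\mathrm{recipient}(c)=\ell\}$. Each location $\ell$ has a prefix-closed set $\mathrm{traces}(\ell)$ of finite or infinite sequences of labels $(c,v)$, $c\in\mathrm{chans}(\ell)$, $v\in\mathcal{D}$. Events come from a set $E$ with $\mathrm{chan}:E\to\mathcal{CH}$, $\mathrm{msg}:E\to\mathcal{D}$. A system of events $(B,\preceq)$ has $B\subseteq E$ and $\preceq$ a partial order with finitely many predecessors per event; it is an execution ($\in\mathrm{exec}(\mathcal{F})$) iff for every location $\ell$ the events whose channel has $\ell$ as sender or recipient are linearly ordered and, read as the sequence of labels $(\mathrm{chan}(e),\mathrm{msg}(e))$, lie in $\mathrm{traces}(\ell)$. For $C\subseteq\mathcal{CH}$, $\mathcal{B}|_C$ keeps events with channel in $C$ with the restricted order; $\mathrm{lruns}_C$ is the set of $\mathcal{A}|_C$, $\mathcal{A}\in\mathrm{exec}(\mathcal{F})$ ($C$-runs);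 $J_C^{C'}(\mathcal{B})=\{\mathcal{A}|_{C'}:\mathcal{A}\in\mathrm{exec}(\mathcal{F}),\ \mathcal{A}|_C=\mathcal{B}\}$. There is no disclosure from $C$ to $C'$ iff $J_C^{C'}(\mathcal{B})=\mathrm{lruns}_{C'}$ for every $C$-run $\mathcal{B}$; this relation is symmetric, and "no disclosure between $C$ and $C'$" means no disclosure from $C$ to $C'$. An undirected path is a sequence of locations $\ell_0,\dots,\ell_n$ and channels $c_1,\dots,c_n$ with each $c_k$ having endpoints $\ell_{k-1},\ell_k$ in some direction (the path traverses the $c_k$). $C_{cut}$ is an undirected cut between $C_s$ and $C_o$ iff $C_s,C_{cut},C_o$ are pairwise disjoint and every undirected path from an endpoint location of a channel in $C_o$ to an endpoint location of a channel in $C_s$ traverses some channel in $C_{cut}$. *)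

theory Defs
  imports Main
begin

text \<open>Locations, channels and data are distinct type variables
  'lo, 'ch, 'd (hence pairwise disjoint). A channel either has endpoints
  (sender, recipient) or not: ends c = Some (sender c, recipient c) or None.
  Finite or infinite sequences of labels are functions nat => label option
  that are None from some point on (finite) or never None (infinite).\<close>

record ('lo, 'ch, 'd) frame =
  ends   :: "'ch \<Rightarrow> ('lo \<times> 'lo) option"
  traces :: "'lo \<Rightarrow> (nat \<Rightarrow> ('ch \<times> 'd) option) set"

definition chans :: "('lo, 'ch, 'd) frame \<Rightarrow> 'lo \<Rightarrow> 'ch set" where
  "chans F l = {c. \<exists>s r. ends F c = Some (s, r) \<and> (s = l \<or> r = l)}"

definition is_seq :: "(nat \<Rightarrow> 'a option) \<Rightarrow> bool" where
  "is_seq s \<longleftrightarrow> (\<forall>i. s i = None \<longrightarrow> s (Suc i) = None)"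

definition seq_prefix :: "nat \<Rightarrow> (nat \<Rightarrow> 'a option) \<Rightarrow> (nat \<Rightarrow> 'a option)" where
  "seq_prefix k s = (\<lambda>i. if i < k then s i else None)"

definition wf_frame :: "('lo, 'ch, 'd) frame \<Rightarrow> bool" where
  "wf_frame F \<longleftrightarrow> (\<forall>l. \<forall>s\<in>traces F l.
      is_seq s \<and> (\<forall>i c v. s i = Some (c, v) \<longrightarrow> c \<in> chans F l)
      \<and> (\<forall>k. seq_prefix k s \<in> traces F l))"

type_synonym 'e sys = "'e set \<times> ('e \<times> 'e) set"

definition system_of_events :: "'e sys \<Rightarrow> bool" where
  "system_of_events S \<longleftrightarrow> (case S of (B, R) \<Rightarrow>
      R \<subseteq> B \<times> B \<and> (\<forall>e\<in>B. (e, e) \<in> R) \<and> antisym R \<and> trans R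
      \<and> (\<forall>e\<in>B. finite {e'. (e', e) \<in> R}))"

definition loc_events :: "('lo, 'ch, 'd) frame \<Rightarrow> ('e \<Rightarrow> 'ch) \<Rightarrow> 'e sys \<Rightarrow> 'lo \<Rightarrow> 'e set" where
  "loc_events F chan S l = {e \<in> fst S. chan e \<in> chans F l}"

text \<open>The label sequence of a linearly ordered set A of events: position i
  holds the label of the event of A having exactly i strict predecessors in A.\<close>
definition label_seq :: "('e \<Rightarrow> 'ch) \<Rightarrow> ('e \<Rightarrow> 'd) \<Rightarrow> ('e \<times> 'e) set \<Rightarrow> 'e set
    \<Rightarrow> nat \<Rightarrow> ('ch \<times> 'd) option" where
  "label_seq chan msg R A = (\<lambda>i.
     if \<exists>e\<in>A. card {e'\<in>A. (e', e) \<in> R \<and> e' \<noteq> e} = i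
     then Some (let e = (THE e. e \<in> A \<and> card {e'\<in>A. (e', e) \<in> R \<and> e' \<noteq> e} = i)
                in (chan e, msg e))
     else None)"

definition exec :: "('lo, 'ch, 'd) frame \<Rightarrow> ('e \<Rightarrow> 'ch) \<Rightarrow> ('e \<Rightarrow> 'd) \<Rightarrow> 'e sys set" where
  "exec F chan msg = {S. system_of_events S \<and>
     (\<forall>l. let A = loc_events F chan S l in
        (\<forall>e1\<in>A. \<forall>e2\<in>A. (e1, e2) \<in> snd S \<or> (e2, e1) \<in> snd S)
        \<and> label_seq chan msg (snd S) A \<in> traces F l)}"

definition restr :: "('e \<Rightarrow> 'ch) \<Rightarrow> 'e sys \<Rightarrow> 'ch set \<Rightarrow> 'e sys" where
  "restr chan S C = (let B' = {e \<in> fst S. chan e \<in> C} in (B', snd S \<inter> (B' \<times> B')))"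

definition lruns :: "('lo, 'ch, 'd) frame \<Rightarrow> ('e \<Rightarrow> 'ch) \<Rightarrow> ('e \<Rightarrow> 'd) \<Rightarrow> 'ch set \<Rightarrow> 'e sys set" where
  "lruns F chan msg C = {restr chan A C | A. A \<in> exec F chan msg}"

definition J :: "('lo, 'ch, 'd) frame \<Rightarrow> ('e \<Rightarrow> 'ch) \<Rightarrow> ('e \<Rightarrow> 'd) \<Rightarrow> 'ch set \<Rightarrow> 'ch set
    \<Rightarrow> 'e sys \<Rightarrow> 'e sys set" where
  "J F chan msg C C' B = {restr chan A C' | A. A \<in> exec F chan msg \<and> restr chan A C = B}"

definition no_disclosure :: "('lo, 'ch, 'd) frame \<Rightarrow> ('e \<Rightarrow> 'ch) \<Rightarrow> ('e \<Rightarrow> 'd) \<Rightarrow> 'ch set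
    \<Rightarrow> 'ch set \<Rightarrow> bool" where
  "no_disclosure F chan msg C C' \<longleftrightarrow>
     (\<forall>B \<in> lruns F chan msg C. J F chan msg C C' B = lruns F chan msg C')"

definition upath :: "('lo, 'ch, 'd) frame \<Rightarrow> 'lo list \<Rightarrow> 'ch list \<Rightarrow> bool" where
  "upath F ls cs \<longleftrightarrow> length ls = Suc (length cs) \<and>
     (\<forall>k < length cs. ends F (cs ! k) = Some (ls ! k, ls ! Suc k)
                   \<or> ends F (cs ! k) = Some (ls ! Suc k, ls ! k))"

definition endlocs :: "('lo, 'ch, 'd) frame \<Rightarrow> 'ch set \<Rightarrow> 'lo set" where
  "endlocs F C = {l. \<exists>c\<in>C. c \<in> chans F l}"

definition undirected_cut :: "('lo, 'ch, 'd) frame \<Rightarrow> 'ch set \<Rightarrow> 'ch set \<Rightarrow> 'ch set \<Rightarrow> bool" where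
  "undirected_cut F Cs Ccut Co \<longleftrightarrow>
     Cs \<inter> Ccut = {} \<and> Cs \<inter> Co = {} \<and> Ccut \<inter> Co = {} \<and>
     (\<forall>ls cs. upath F ls cs \<and> hd ls \<in> endlocs F Co \<and> last ls \<in> endlocs F Cs
        \<longrightarrow> (\<exists>c\<in>set cs. c \<in> Ccut))"

end

theory Submission
  imports Defs
begin


lemma label_seq_cong:
  assumes "R \<inter> (A \<times> A) = R' \<inter> (A \<times> A)"
  shows "label_seq chan msg R A = label_seq chan msg R' A"
proof -
  have H: "\<And>e. e \<in> A \<Longrightarrow> {e'\<in>A. (e', e) \<in> R \<and> e' \<noteq> e} = {e'\<in>A. (e', e) \<in> R' \<and> e' \<noteq> e}"
    using assms by blast
  show ?thesis unfolding label_seq_def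
    by (rule ext) (simp add: H cong: conj_cong)
qed

lemma sys_fin:
  assumes "system_of_events (B, R)"
  shows "finite {x. (x, e) \<in> R}"
proof (cases "e \<in> B")
  case True then show ?thesis using assms by (simp add: system_of_events_def)
next
  case False
  then have "{x. (x, e) \<in> R} = {}" using assms by (auto simp: system_of_events_def)
  then show ?thesis by simp
qed

lemma trans_glue:
  assumes c22: "\<And>a b c. (a,b) \<in> X \<Longrightarrow> (b,c) \<in> X \<Longrightarrow> (a,c) \<in> X"
  and c33: "\<And>a b c. (a,b) \<in> Y \<Longrightarrow> (b,c) \<in> Y \<Longrightarrow> (a,c) \<in> Y"
  and c323: "\<And>a b c d. (a,b) \<in> Y \<Longrightarrow> (b,c) \<in> X \<Longrightarrow> (c,d) \<in> Y \<Longrightarrow> (a,d) \<in> Y"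
  and c232: "\<And>a b c d. (a,b) \<in> X \<Longrightarrow> (b,c) \<in> Y \<Longrightarrow> (c,d) \<in> X \<Longrightarrow> (a,d) \<in> X"
  shows "trans (X \<union> Y \<union> X O Y \<union> Y O X)"
  unfolding trans_def
proof (intro allI impI)
  fix x y z assume xy: "(x,y) \<in> X \<union> Y \<union> X O Y \<union> Y O X" and yz: "(y,z) \<in> X \<union> Y \<union> X O Y \<union> Y O X"
  from xy have xy': "(x,y) \<in> X \<or> (x,y) \<in> Y \<or> (\<exists>a. (x,a) \<in> X \<and> (a,y) \<in> Y) \<or> (\<exists>a. (x,a) \<in> Y \<and> (a,y) \<in> X)" by blast
  from yz have yz': "(y,z) \<in> X \<or> (y,z) \<in> Y \<or> (\<exists>a. (y,a) \<in> X \<and> (a,z) \<in> Y) \<or> (\<exists>a. (y,a) \<in> Y \<and> (a,z) \<in> X)" by blast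
  show "(x,z) \<in> X \<union> Y \<union> X O Y \<union> Y O X"
    using xy' yz' by (elim disjE exE conjE; meson c22 c33 c323 c232 relcompI UnI1 UnI2)
qed

lemma glue:
  assumes A2: "(B2,R2) \<in> exec F chan msg" and A3: "(B3,R3) \<in> exec F chan msg"
  and PC: "P \<inter> Ccut = {}"
  and loc: "\<And>l. chans F l \<inter> P = {} \<or> chans F l \<subseteq> P \<union> Ccut"
  and eq: "restr chan (B2,R2) Ccut = restr chan (B3,R3) Ccut"
  shows "\<exists>A \<in> exec F chan msg. (\<forall>C. C \<subseteq> P \<union> Ccut \<longrightarrow> restr chan A C = restr chan (B2,R2) C)
      \<and> (\<forall>C. C \<inter> P = {} \<longrightarrow> restr chan A C = restr chan (B3,R3) C)"
proof -
  define K where "K = {e\<in>B2. chan e \<in> Ccut}"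
  define E2 where "E2 = {e\<in>B2. chan e \<in> P \<union> Ccut}"
  define E3 where "E3 = {e\<in>B3. chan e \<notin> P}"
  define R2' where "R2' = R2 \<inter> E2 \<times> E2"
  define R3' where "R3' = R3 \<inter> E3 \<times> E3"
  define R where "R = R2' \<union> R3' \<union> (R2' O R3') \<union> (R3' O R2')"
  define B where "B = E2 \<union> E3"
  have K3: "K = {e\<in>B3. chan e \<in> Ccut}" using eq by (simp add: restr_def K_def Let_def)
  have KR0: "R2 \<inter> K \<times> K = R3 \<inter> K \<times> K" using eq K3 unfolding K_def by (simp add: restr_def Let_def)
  have KR: "\<And>x y. x \<in> K \<Longrightarrow> y \<in> K \<Longrightarrow> (x,y) \<in> R2 \<longleftrightarrow> (x,y) \<in> R3" using KR0 by blast
  have E23: "E2 \<inter> E3 = K" using K3 PC by (auto simp: E2_def E3_def K_def)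
  have KE2: "K \<subseteq> E2" and KE3: "K \<subseteq> E3" using E23 by auto
  have s2: "system_of_events (B2,R2)" using A2 by (simp add: exec_def)
  have s3: "system_of_events (B3,R3)" using A3 by (simp add: exec_def)
  have t2: "\<And>x y z. (x,y) \<in> R2 \<Longrightarrow> (y,z) \<in> R2 \<Longrightarrow> (x,z) \<in> R2"
    using s2 unfolding system_of_events_def trans_def by blast
  have t3: "\<And>x y z. (x,y) \<in> R3 \<Longrightarrow> (y,z) \<in> R3 \<Longrightarrow> (x,z) \<in> R3"
    using s3 unfolding system_of_events_def trans_def by blast
  have a2: "\<And>x y. (x,y) \<in> R2 \<Longrightarrow> (y,x) \<in> R2 \<Longrightarrow> x = y"
    using s2 unfolding system_of_events_def antisym_def by blast
  have a3: "\<And>x y. (x,y) \<in> R3 \<Longrightarrow> (y,x) \<in> R3 \<Longrightarrow> x = y"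
    using s3 unfolding system_of_events_def antisym_def by blast
  have c22: "\<And>a b c. (a,b) \<in> R2' \<Longrightarrow> (b,c) \<in> R2' \<Longrightarrow> (a,c) \<in> R2'"
    unfolding R2'_def using t2 by blast
  have c33: "\<And>a b c. (a,b) \<in> R3' \<Longrightarrow> (b,c) \<in> R3' \<Longrightarrow> (a,c) \<in> R3'"
    unfolding R3'_def using t3 by blast
  have m2: "\<And>a b. (a,b) \<in> R2' \<Longrightarrow> a \<in> E3 \<Longrightarrow> b \<in> E3 \<Longrightarrow> (a,b) \<in> R3'"
  proof -
    fix a b assume "(a,b) \<in> R2'" "a \<in> E3" "b \<in> E3"
    then have "a \<in> K" "b \<in> K" "(a,b) \<in> R2" using E23 unfolding R2'_def by auto
    then show "(a,b) \<in> R3'" using KR KE3 unfolding R3'_def by blast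
  qed
  have m3: "\<And>a b. (a,b) \<in> R3' \<Longrightarrow> a \<in> E2 \<Longrightarrow> b \<in> E2 \<Longrightarrow> (a,b) \<in> R2'"
  proof -
    fix a b assume "(a,b) \<in> R3'" "a \<in> E2" "b \<in> E2"
    then have "a \<in> K" "b \<in> K" "(a,b) \<in> R3" using E23 unfolding R3'_def by auto
    then show "(a,b) \<in> R2'" using KR KE2 unfolding R2'_def by blast
  qed
  have d2: "\<And>a b. (a,b) \<in> R2' \<Longrightarrow> a \<in> E2 \<and> b \<in> E2" unfolding R2'_def by auto
  have d3: "\<And>a b. (a,b) \<in> R3' \<Longrightarrow> a \<in> E3 \<and> b \<in> E3" unfolding R3'_def by auto
  have c323: "\<And>a b c d. (a,b) \<in> R3' \<Longrightarrow> (b,c) \<in> R2' \<Longrightarrow> (c,d) \<in> R3' \<Longrightarrow> (a,d) \<in> R3'"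
    by (meson c33 d3 m2)
  have c232: "\<And>a b c d. (a,b) \<in> R2' \<Longrightarrow> (b,c) \<in> R3' \<Longrightarrow> (c,d) \<in> R2' \<Longrightarrow> (a,d) \<in> R2'"
    by (meson c22 d2 m3)
  have RE2: "R \<inter> E2 \<times> E2 = R2'"
  proof (rule equalityI; clarify)
    fix x y assume xy: "(x,y) \<in> R" "x \<in> E2" "y \<in> E2"
    then have "(x,y) \<in> R2' \<or> (x,y) \<in> R3' \<or> (\<exists>a. (x,a) \<in> R2' \<and> (a,y) \<in> R3') \<or> (\<exists>a. (x,a) \<in> R3' \<and> (a,y) \<in> R2')"
      unfolding R_def by blast
    then show "(x,y) \<in> R2'"
      using xy by (elim disjE exE conjE; meson c22 m3 d2 d3)
  qed (auto simp: R_def R2'_def)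
  have RE3: "R \<inter> E3 \<times> E3 = R3'"
  proof (rule equalityI; clarify)
    fix x y assume xy: "(x,y) \<in> R" "x \<in> E3" "y \<in> E3"
    then have "(x,y) \<in> R2' \<or> (x,y) \<in> R3' \<or> (\<exists>a. (x,a) \<in> R2' \<and> (a,y) \<in> R3') \<or> (\<exists>a. (x,a) \<in> R3' \<and> (a,y) \<in> R2')"
      unfolding R_def by blast
    then show "(x,y) \<in> R3'"
      using xy by (elim disjE exE conjE; meson c33 m2 d2 d3)
  qed (auto simp: R_def R3'_def)
  have transR: "trans R"
    unfolding R_def by (rule trans_glue) (fact c22 c33 c323 c232)+
  have antisymR: "antisym R"
    unfolding antisym_def
  proof (intro allI impI)
    fix x y assume xy: "(x,y) \<in> R" and yx: "(y,x) \<in> R"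
    have xB: "x \<in> E2 \<union> E3" "y \<in> E2 \<union> E3" using xy unfolding R_def R2'_def R3'_def by auto
    show "x = y"
    proof (cases "x \<in> E2 \<and> y \<in> E2")
      case True then show ?thesis using xy yx RE2 a2 unfolding R2'_def by blast
    next
      case F1: False
      show ?thesis
      proof (cases "x \<in> E3 \<and> y \<in> E3")
        case True then show ?thesis using xy yx RE3 a3 unfolding R3'_def by blast
      next
        case F2: False
        have "(x \<in> E2 - E3 \<and> y \<in> E3 - E2) \<or> (x \<in> E3 - E2 \<and> y \<in> E2 - E3)"
          using F1 F2 xB by blast
        then show ?thesis
        proof
          assume h: "x \<in> E2 - E3 \<and> y \<in> E3 - E2"
          obtain c where c: "(x,c) \<in> R2'" "(c,y) \<in> R3'" using xy h unfolding R_def R2'_def R3'_def by blast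
          obtain d where d: "(y,d) \<in> R3'" "(d,x) \<in> R2'" using yx h unfolding R_def R2'_def R3'_def by blast
          have cK: "c \<in> K" "d \<in> K" using c d E23 unfolding R2'_def R3'_def by auto
          have "(c,d) \<in> R3" using c d t3 unfolding R3'_def by blast
          then have "(c,d) \<in> R2" using KR cK by blast
          then have "(c,x) \<in> R2" using d t2 unfolding R2'_def by blast
          then have "x = c" using a2 c unfolding R2'_def by blast
          then show ?thesis using cK h KE3 by blast
        next
          assume h: "x \<in> E3 - E2 \<and> y \<in> E2 - E3"
          obtain c where c: "(x,c) \<in> R3'" "(c,y) \<in> R2'" using xy h unfolding R_def R2'_def R3'_def by blast
          obtain d where d: "(y,d) \<in> R2'" "(d,x) \<in> R3'" using yx h unfolding R_def R2'_def R3'_def by blast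
          have cK: "c \<in> K" "d \<in> K" using c d E23 unfolding R2'_def R3'_def by auto
          have "(c,d) \<in> R2" using c d t2 unfolding R2'_def by blast
          then have "(c,d) \<in> R3" using KR cK by blast
          then have "(c,x) \<in> R3" using d t3 unfolding R3'_def by blast
          then have "x = c" using a3 c unfolding R3'_def by blast
          then show ?thesis using cK h KE2 by blast
        qed
      qed
    qed
  qed
  have finR: "finite {x. (x,e) \<in> R}" for e
  proof -
    have f2: "\<And>e. finite {x. (x,e) \<in> R2}" using sys_fin[OF s2] by blast
    have f3: "\<And>e. finite {x. (x,e) \<in> R3}" using sys_fin[OF s3] by blast
    have "{x. (x,e) \<in> R} \<subseteq> {x. (x,e) \<in> R2} \<union> {x. (x,e) \<in> R3}
       \<union> (\<Union>c\<in>{c. (c,e) \<in> R3}. {x. (x,c) \<in> R2}) \<union> (\<Union>c\<in>{c. (c,e) \<in> R2}. {x. (x,c) \<in> R3})"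
      unfolding R_def R2'_def R3'_def by blast
    moreover have "finite ({x. (x,e) \<in> R2} \<union> {x. (x,e) \<in> R3}
       \<union> (\<Union>c\<in>{c. (c,e) \<in> R3}. {x. (x,c) \<in> R2}) \<union> (\<Union>c\<in>{c. (c,e) \<in> R2}. {x. (x,c) \<in> R3}))"
      using f2 f3 by auto
    ultimately show ?thesis by (rule finite_subset)
  qed
  have RB: "R \<subseteq> B \<times> B" unfolding R_def R2'_def R3'_def B_def by auto
  have r2: "\<forall>e\<in>B2. (e,e) \<in> R2" using s2 by (simp add: system_of_events_def)
  have r3: "\<forall>e\<in>B3. (e,e) \<in> R3" using s3 by (simp add: system_of_events_def)
  have reflR: "\<forall>e\<in>B. (e,e) \<in> R"
  proof
    fix e assume "e \<in> B"
    then have "e \<in> E2 \<or> e \<in> E3" unfolding B_def by auto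
    then show "(e,e) \<in> R"
    proof
      assume "e \<in> E2" then have "(e,e) \<in> R2'" using r2 unfolding R2'_def E2_def by auto
      then show ?thesis unfolding R_def by auto
    next
      assume "e \<in> E3" then have "(e,e) \<in> R3'" using r3 unfolding R3'_def E3_def by auto
      then show ?thesis unfolding R_def by auto
    qed
  qed
  have sysR: "system_of_events (B,R)"
    unfolding system_of_events_def using RB reflR transR antisymR finR by simp
  have XE2: "\<And>X. X \<subseteq> E2 \<Longrightarrow> R \<inter> X \<times> X = R2 \<inter> X \<times> X" using RE2 unfolding R2'_def by blast
  have XE3: "\<And>X. X \<subseteq> E3 \<Longrightarrow> R \<inter> X \<times> X = R3 \<inter> X \<times> X" using RE3 unfolding R3'_def by blast
  have sel2: "\<And>C. C \<subseteq> P \<union> Ccut \<Longrightarrow> {e\<in>B. chan e \<in> C} = {e\<in>B2. chan e \<in> C} \<and> {e\<in>B2. chan e \<in> C} \<subseteq> E2"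
    using K3 unfolding B_def E2_def E3_def K_def by blast
  have sel3: "\<And>C. C \<inter> P = {} \<Longrightarrow> {e\<in>B. chan e \<in> C} = {e\<in>B3. chan e \<in> C} \<and> {e\<in>B3. chan e \<in> C} \<subseteq> E3"
    using K3 unfolding B_def E2_def E3_def K_def by blast
  have ex: "(B,R) \<in> exec F chan msg"
    unfolding exec_def
  proof (simp only: mem_Collect_eq, intro conjI allI sysR)
    fix l
    show "let A = loc_events F chan (B, R) l
          in (\<forall>e1\<in>A. \<forall>e2\<in>A. (e1, e2) \<in> snd (B, R) \<or> (e2, e1) \<in> snd (B, R)) \<and>
             label_seq chan msg (snd (B, R)) A \<in> traces F l"
    proof (cases "chans F l \<subseteq> P \<union> Ccut")
      case True
      note S = sel2[OF True]
      have L: "loc_events F chan (B,R) l = loc_events F chan (B2,R2) l"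
        using S by (simp add: loc_events_def)
      have X: "R \<inter> loc_events F chan (B2,R2) l \<times> loc_events F chan (B2,R2) l
             = R2 \<inter> loc_events F chan (B2,R2) l \<times> loc_events F chan (B2,R2) l"
        using XE2 S by (simp add: loc_events_def)
      have h2: "let A = loc_events F chan (B2, R2) l
          in (\<forall>e1\<in>A. \<forall>e2\<in>A. (e1, e2) \<in> snd (B2, R2) \<or> (e2, e1) \<in> snd (B2, R2)) \<and>
             label_seq chan msg (snd (B2, R2)) A \<in> traces F l"
        using A2 unfolding exec_def by blast
      have X': "\<And>a b. a \<in> loc_events F chan (B2,R2) l \<Longrightarrow> b \<in> loc_events F chan (B2,R2) l \<Longrightarrow> (a,b) \<in> R \<longleftrightarrow> (a,b) \<in> R2"
        using X by blast
      show ?thesis using h2 X' label_seq_cong[OF X, of chan msg] unfolding L Let_def snd_conv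
        by auto
    next
      case False
      then have F0: "chans F l \<inter> P = {}" using loc by blast
      note S = sel3[OF F0]
      have L: "loc_events F chan (B,R) l = loc_events F chan (B3,R3) l"
        using S by (simp add: loc_events_def)
      have X: "R \<inter> loc_events F chan (B3,R3) l \<times> loc_events F chan (B3,R3) l
             = R3 \<inter> loc_events F chan (B3,R3) l \<times> loc_events F chan (B3,R3) l"
        using XE3 S by (simp add: loc_events_def)
      have h3: "let A = loc_events F chan (B3, R3) l
          in (\<forall>e1\<in>A. \<forall>e2\<in>A. (e1, e2) \<in> snd (B3, R3) \<or> (e2, e1) \<in> snd (B3, R3)) \<and>
             label_seq chan msg (snd (B3, R3)) A \<in> traces F l"
        using A3 unfolding exec_def by blast
      have X': "\<And>a b. a \<in> loc_events F chan (B3,R3) l \<Longrightarrow> b \<in> loc_events F chan (B3,R3) l \<Longrightarrow> (a,b) \<in> R \<longleftrightarrow> (a,b) \<in> R3"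
        using X by blast
      show ?thesis using h3 X' label_seq_cong[OF X, of chan msg] unfolding L Let_def snd_conv
        by auto
    qed
  qed
  show ?thesis
  proof (rule bexI[OF _ ex], intro conjI allI impI)
    fix C assume C: "C \<subseteq> P \<union> Ccut"
    note S = sel2[OF C]
    show "restr chan (B, R) C = restr chan (B2, R2) C"
      using S XE2[OF conjunct2[OF S]] by (simp add: restr_def Let_def)
  next
    fix C assume C: "C \<inter> P = {}"
    note S = sel3[OF C]
    show "restr chan (B, R) C = restr chan (B3, R3) C"
      using S XE3[OF conjunct2[OF S]] by (simp add: restr_def Let_def)
  qed
qed



lemma upath_snoc:
  assumes "upath F ls cs" "ends F c = Some (last ls, r) \<or> ends F c = Some (r, last ls)"
  shows "upath F (ls @ [r]) (cs @ [c])"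
proof -
  have len: "length ls = Suc (length cs)" using assms(1) by (simp add: upath_def)
  have lastn: "last ls = ls ! length cs" using len
    by (metis diff_Suc_1 last_conv_nth list.size(3) nat.distinct(1))
  show ?thesis unfolding upath_def
  proof (intro conjI allI impI)
    show "length (ls @ [r]) = Suc (length (cs @ [c]))" using len by simp
  next
    fix k assume k: "k < length (cs @ [c])"
    show "ends F ((cs @ [c]) ! k) = Some ((ls @ [r]) ! k, (ls @ [r]) ! Suc k) \<or>
          ends F ((cs @ [c]) ! k) = Some ((ls @ [r]) ! Suc k, (ls @ [r]) ! k)"
    proof (cases "k < length cs")
      case True
      then show ?thesis using assms(1) len by (simp add: upath_def nth_append)
    next
      case False
      then have "k = length cs" using k by simp
      then show ?thesis using assms(2) len lastn by (simp add: nth_append)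
    qed
  qed
qed

theorem theorem1:
  fixes F :: "('lo, 'ch, 'd) frame"
    and chan :: "'e \<Rightarrow> 'ch" and msg :: "'e \<Rightarrow> 'd"
    and Cs Ccut Co :: "'ch set"
  assumes "wf_frame F"
    and "undirected_cut F Cs Ccut Co"
    and "no_disclosure F chan msg Cs Ccut"
  shows "no_disclosure F chan msg Cs Co"
proof -
  define Ob where "Ob = {l. \<exists>ls cs. upath F ls cs \<and> hd ls \<in> endlocs F Co \<and> last ls = l \<and> set cs \<inter> Ccut = {}}"
  define P where "P = {c. (c \<notin> Ccut \<and> (\<exists>l\<in>Ob. c \<in> chans F l)) \<or> (c \<in> Co \<and> ends F c = None)}"
  have cut: "Cs \<inter> Ccut = {}" "Cs \<inter> Co = {}" "Ccut \<inter> Co = {}"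
    and cutp: "\<And>ls cs. upath F ls cs \<Longrightarrow> hd ls \<in> endlocs F Co \<Longrightarrow> last ls \<in> endlocs F Cs \<Longrightarrow> \<exists>c\<in>set cs. c \<in> Ccut"
    using assms(2) unfolding undirected_cut_def by blast+
  have ext: "r \<in> Ob" if l: "l \<in> Ob" and c: "c \<notin> Ccut" and e: "ends F c = Some (l, r) \<or> ends F c = Some (r, l)" for l r c
  proof -
    obtain ls cs where p: "upath F ls cs" "hd ls \<in> endlocs F Co" "last ls = l" "set cs \<inter> Ccut = {}"
      using l unfolding Ob_def by blast
    have ne: "ls \<noteq> []" using p(1) by (auto simp: upath_def)
    have "upath F (ls @ [r]) (cs @ [c])" using upath_snoc[OF p(1)] e p(3) by blast
    moreover have "hd (ls @ [r]) \<in> endlocs F Co" using p(2) ne by simp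
    moreover have "last (ls @ [r]) = r" by simp
    moreover have "set (cs @ [c]) \<inter> Ccut = {}" using p(4) c by simp
    ultimately show ?thesis unfolding Ob_def by blast
  qed
  have endsO: "s \<in> Ob \<and> r \<in> Ob" if h: "c \<notin> Ccut" "l \<in> Ob" "c \<in> chans F l" "ends F c = Some (s, r)" for c l s r
  proof -
    have "s = l \<or> r = l" using h(3,4) unfolding chans_def by auto
    then show ?thesis
    proof
      assume "s = l" then show ?thesis using ext[OF h(2) h(1)] h(2,4) by blast
    next
      assume "r = l" then show ?thesis using ext[OF h(2) h(1)] h(2,4) by blast
    qed
  qed
  have PC: "P \<inter> Ccut = {}" using cut unfolding P_def by blast
  have loc: "chans F l \<inter> P = {} \<or> chans F l \<subseteq> P \<union> Ccut" for l
  proof (cases "chans F l \<inter> P = {}")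
    case False
    then obtain c where c: "c \<in> chans F l" "c \<in> P" by blast
    obtain s r where sr: "ends F c = Some (s, r)" "s = l \<or> r = l" using c(1) unfolding chans_def by blast
    have cc: "c \<notin> Ccut" "\<exists>l'\<in>Ob. c \<in> chans F l'" using c(2) sr unfolding P_def by auto
    then have "l \<in> Ob" using endsO sr by blast
    then have "chans F l \<subseteq> P \<union> Ccut" unfolding P_def by blast
    then show ?thesis by blast
  qed simp
  have CoP: "Co \<subseteq> P"
  proof
    fix c assume c: "c \<in> Co"
    show "c \<in> P"
    proof (cases "ends F c")
      case None then show ?thesis using c unfolding P_def by blast
    next
      case (Some a)
      then obtain s r where sr: "ends F c = Some (s, r)" by (cases a) auto
      have cs: "c \<in> chans F s" using sr unfolding chans_def by blast
      have "upath F [s] []" by (simp add: upath_def)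
      moreover have "hd [s] \<in> endlocs F Co" using cs c unfolding endlocs_def by auto
      ultimately have "s \<in> Ob" unfolding Ob_def by fastforce
      then show ?thesis using cs c cut unfolding P_def by blast
    qed
  qed
  have CsP: "Cs \<inter> P = {}"
  proof (rule ccontr)
    assume "Cs \<inter> P \<noteq> {}"
    then obtain c where c: "c \<in> Cs" "c \<in> P" by blast
    then obtain l where l: "l \<in> Ob" "c \<in> chans F l" "c \<notin> Ccut" using cut unfolding P_def by blast
    obtain ls cs where p: "upath F ls cs" "hd ls \<in> endlocs F Co" "last ls = l" "set cs \<inter> Ccut = {}"
      using l unfolding Ob_def by blast
    have "last ls \<in> endlocs F Cs" using p(3) l c unfolding endlocs_def by blast
    then show False using cutp[OF p(1,2)] p(4) by blast
  qed
  show ?thesis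
    unfolding no_disclosure_def
  proof
    fix Bs assume Bs: "Bs \<in> lruns F chan msg Cs"
    show "J F chan msg Cs Co Bs = lruns F chan msg Co"
    proof
      show "J F chan msg Cs Co Bs \<subseteq> lruns F chan msg Co" unfolding J_def lruns_def by blast
    next
      show "lruns F chan msg Co \<subseteq> J F chan msg Cs Co Bs"
      proof
        fix D assume "D \<in> lruns F chan msg Co"
        then obtain A2 where A2: "A2 \<in> exec F chan msg" "D = restr chan A2 Co" unfolding lruns_def by blast
        have "restr chan A2 Ccut \<in> lruns F chan msg Ccut" using A2 unfolding lruns_def by blast
        then have "restr chan A2 Ccut \<in> J F chan msg Cs Ccut Bs" using assms(3) Bs unfolding no_disclosure_def by blast
        then obtain A3 where A3: "A3 \<in> exec F chan msg" "restr chan A3 Cs = Bs" "restr chan A3 Ccut = restr chan A2 Ccut"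
          unfolding J_def by auto
        obtain B2 R2 where b2: "A2 = (B2, R2)" by (cases A2)
        obtain B3 R3 where b3: "A3 = (B3, R3)" by (cases A3)
        obtain A where A: "A \<in> exec F chan msg" "\<forall>C. C \<subseteq> P \<union> Ccut \<longrightarrow> restr chan A C = restr chan A2 C"
            "\<forall>C. C \<inter> P = {} \<longrightarrow> restr chan A C = restr chan A3 C"
          using glue[OF A2(1)[unfolded b2] A3(1)[unfolded b3] PC loc A3(3)[unfolded b2 b3, symmetric]] unfolding b2 b3 by blast
        have "restr chan A Co = D" using A(2) CoP A2(2) by blast
        moreover have "restr chan A Cs = Bs" using A(3) CsP A3(2) by blast
        ultimately show "D \<in> J F chan msg Cs Co Bs" using A(1) unfolding J_def by blast
      qed
    qed
  qed
qed
end
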